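(* Fix $N_x,N_s,N_\phi\in\mathbb{N}$ and angles $0\le\phi_0<\dots<\phi_{N_\phi-1}<\pi$, with the discretization described in the context. Let $f_\delta\in U_\delta$. Then for all $\hat q\in\{0,\dots,N_\phi-1\}$ and $\hat p\in\{0,\dots,N_s-1\}$, $$[\mathcal{R} f_\delta](\phi_{\hat q},s_{\hat p})=[\mathcal{R}_{\omega^{\mathrm{rd}}} f_\delta](\phi_{\hat q},s_{\hat p}).$$ Moreover, for fixed $\hat q$ and fixed $\hat i,\hat j\in\{0,\dots,N_x-1\}$ such that $x_{\hat i\hat j}\cdot\vartheta_{\hat q}\in[s_0,s_{N_s-1}]$, we have $$\sum_{p=0}^{N_s-1}\omega^{\mathrm{pd}}(x_{\hat i\hat j}\cdot\vartheta_{\hat q}-s_p)=\frac{1}{\delta_s},$$ where the sum has exactly two non-zero summands, namely $p=\hat p$ and $p=\hat p+1$, if $x_{\hat i\hat j}\cdot\vartheta_{\hat q}\in\,]s_{\hat p},s_{\hat p+1}[$, and exactly one non-zero summand, $p=\hat p$, if $x_{\hat i\hat j}\cdot\vartheta_{\hat q}=s_{\hat p}$.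
   Context: Let $\Omega=B(0,1)\subset\mathbb{R}^2$ and $\Sigma=[0,\pi[\times\,]-1,1[$. For $\phi\in\mathbb{R}$ write $\vartheta_\phi=(\cos\phi,\sin\phi)$, $\vartheta_\phi^\perp=(-\sin\phi,\cos\phi)$, and $\vartheta_q:=\vartheta_{\phi_q}$. The Radon transform of an (integrable, e.g. piecewise constant) function $f$ on $\Omega$ is $[\mathcal{R}f](\phi,s)=\int_{-\sqrt{1-s^2}}^{\sqrt{1-s^2}} f(s\vartheta_\phi+t\vartheta_\phi^\perp)\,dt$, i.e. the integral of $f$ along the line $L_{\phi,s}=\{s\vartheta_\phi+t\vartheta_\phi^\perp: t\in\mathbb{R}\}$ with respect to one-dimensional Hausdorff measure. Discretization: $\delta_x=2/N_x$, pixel centers $x_{ij}=((i+\tfrac12)\delta_x-1,(j+\tfrac12)\delta_x-1)$ and pixels $X_{ij}=x_{ij}+[-\delta_x/2,\delta_x/2]^2$ for $i,j\in\{0,\dots,N_x-1\}$. $\delta_s=2/N_s$, detector centers $s_p=(p+\tfrac12)\delta_s-1$, detector pixels $S_p=s_p+[-\delta_s/2,\delta_s/2[$, $p\in\{0,\dots,N_s-1\}$. Angular pixels $\Phi_q=[\frac{\phi_{q-1}+\phi_q}{2},\frac{\phi_q+\phi_{q+1}}{2}[$ with $\phi_{-1}:=\phi_{N_\phi-1}-\pi$, $\phi_{N_\phi}:=\phi_0+\pi$ (projected $\pi$-periodically into $[0,\pi[$ if necessary). $U_\delta=\mathrm{span}\{u_{ij}\}$ with $u_{ij}=\chi_{X_{ij}}-\frac12\chi_{\partial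 X_{ij}}$ ($\chi_M$ the indicator of $M$). Ray-driven weight: for $\phi\in[0,\pi[$ let $\overline s(\phi)=\frac{\delta_x}{2}(|\cos\phi|+|\sin\phi|)$, $\underline s(\phi)=\frac{\delta_x}{2}\big||\cos\phi|-|\sin\phi|\big|$, $\kappa(\phi)=\min\{1/|\cos\phi|,1/|\sin\phi|\}$ (with $1/0=\infty$), and for $t\in\mathbb{R}$ $$\omega^{\mathrm{rd}}(\phi,t)=\frac{1}{\delta_x}\begin{cases}\frac{\overline s(\phi)-|t|}{\delta_x|\cos\phi\sin\phi|}& |t|\in[\underline s(\phi),\overline s(\phi)[,\\ \kappa(\phi)& |t|<\underline s(\phi),\\ \frac12 & \phi\in\{0,\pi/2\},\ |t|=\overline s(\phi),\\ 0&\text{else}.\end{cases}$$ Pixel-driven weight: $\omega^{\mathrm{pd}}(t)=\frac{1}{\delta_s^2}\max\{\delta_s-|t|,0\}$ (independent of $\phi$). Convolutional Radon transform for a weight $\omega$: for $f\in L^2(\Omega)$, $$[\mathcal{R}_\omega f](\phi,s)=\sum_{q=0}^{N_\phi-1}\sum_{p=0}^{N_s-1}\chi_{\Phi_q\times S_p}(\phi,s)\sum_{i,j=0}^{N_x-1}\omega(\phi_q,x_{ij}\cdot\vartheta_q-s_p)\int_{X_{ij}}f(x)\,dx,$$ and $\mathcal{R}_{\omega^{\mathrm{rd}}}$ is the ray-driven Radon transform.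
   Formalization: The function $f_\delta \in U_\delta$ also vanishes outside the closed unit disk, so its coefficient on every pixel $X_{ij}$ not contained in that disk is zero. The statement above fails without it. *)

theory Defs
  imports "HOL-Analysis.Analysis"
begin

definition dx :: "nat \<Rightarrow> real" where "dx Nx = 2 / real Nx"

definition xc :: "nat \<Rightarrow> nat \<Rightarrow> nat \<Rightarrow> real \<times> real" where
  "xc Nx i j = ((real i + 1/2) * dx Nx - 1, (real j + 1/2) * dx Nx - 1)"

definition pix :: "nat \<Rightarrow> nat \<Rightarrow> nat \<Rightarrow> (real \<times> real) set" where
  "pix Nx i j = cbox (xc Nx i j - (dx Nx / 2, dx Nx / 2)) (xc Nx i j + (dx Nx / 2, dx Nx / 2))"

definition ds :: "nat \<Rightarrow> real" where "ds Ns = 2 / real Ns"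

definition sc :: "nat \<Rightarrow> nat \<Rightarrow> real" where
  "sc Ns p = (real p + 1/2) * ds Ns - 1"

definition detpix :: "nat \<Rightarrow> nat \<Rightarrow> real set" where
  "detpix Ns p = {sc Ns p - ds Ns / 2 ..< sc Ns p + ds Ns / 2}"

definition theta :: "real \<Rightarrow> real \<times> real" where "theta \<phi> = (cos \<phi>, sin \<phi>)"
definition thetap :: "real \<Rightarrow> real \<times> real" where "thetap \<phi> = (- sin \<phi>, cos \<phi>)"

definition ubasis :: "nat \<Rightarrow> nat \<Rightarrow> nat \<Rightarrow> real \<times> real \<Rightarrow> real" where
  "ubasis Nx i j x = indicator (pix Nx i j) x - 1/2 * indicator (frontier (pix Nx i j)) x"

definition in_U :: "nat \<Rightarrow> (real \<times> real \<Rightarrow> real) \<Rightarrow> bool" where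
  "in_U Nx f \<longleftrightarrow> (\<exists>c :: nat \<Rightarrow> nat \<Rightarrow> real.
      f = (\<lambda>x. \<Sum>i<Nx. \<Sum>j<Nx. c i j * ubasis Nx i j x))"

text \<open>Radon transform (line integral over the chord of the unit disk).\<close>
definition radon :: "(real \<times> real \<Rightarrow> real) \<Rightarrow> real \<Rightarrow> real \<Rightarrow> real" where
  "radon f \<phi> s = integral {- sqrt (1 - s\<^sup>2) .. sqrt (1 - s\<^sup>2)}
      (\<lambda>t. f (s *\<^sub>R theta \<phi> + t *\<^sub>R thetap \<phi>))"

text \<open>kappa(phi) = min(1/|cos|, 1/|sin|) with 1/0 = infinity.\<close>
definition kappa :: "real \<Rightarrow> real" where
  "kappa \<phi> = (if cos \<phi> = 0 then 1 / \<bar>sin \<phi>\<bar>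
              else if sin \<phi> = 0 then 1 / \<bar>cos \<phi>\<bar>
              else min (1 / \<bar>cos \<phi>\<bar>) (1 / \<bar>sin \<phi>\<bar>))"

definition sbar :: "real \<Rightarrow> real \<Rightarrow> real" where
  "sbar d \<phi> = d / 2 * (\<bar>cos \<phi>\<bar> + \<bar>sin \<phi>\<bar>)"

definition sunder :: "real \<Rightarrow> real \<Rightarrow> real" where
  "sunder d \<phi> = d / 2 * \<bar>\<bar>cos \<phi>\<bar> - \<bar>sin \<phi>\<bar>\<bar>"

definition omega_rd :: "real \<Rightarrow> real \<Rightarrow> real \<Rightarrow> real" where
  "omega_rd d \<phi> t = (1 / d) *
     (if sunder d \<phi> \<le> \<bar>t\<bar> \<and> \<bar>t\<bar> < sbar d \<phi> then (sbar d \<phi> - \<bar>t\<bar>) / (d * \<bar>cos \<phi> * sin \<phi>\<bar>)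
      else if \<bar>t\<bar> < sunder d \<phi> then kappa \<phi>
      else if (\<phi> = 0 \<or> \<phi> = pi / 2) \<and> \<bar>t\<bar> = sbar d \<phi> then 1 / 2
      else 0)"

definition omega_pd :: "real \<Rightarrow> real \<Rightarrow> real" where
  "omega_pd d t = max (d - \<bar>t\<bar>) 0 / d\<^sup>2"

definition phiext :: "nat \<Rightarrow> (nat \<Rightarrow> real) \<Rightarrow> int \<Rightarrow> real" where
  "phiext Nphi phi q = (if q = -1 then phi (Nphi - 1) - pi
                        else if q = int Nphi then phi 0 + pi
                        else phi (nat q))"

text \<open>Angular pixel Phi_q, projected pi-periodically into [0,pi[.\<close>
definition angpix :: "nat \<Rightarrow> (nat \<Rightarrow> real) \<Rightarrow> nat \<Rightarrow> real set" where
  "angpix Nphi phi q = {\<psi> \<in> {0..<pi}. \<exists>k::int.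
      (phiext Nphi phi (int q - 1) + phiext Nphi phi (int q)) / 2 \<le> \<psi> + real_of_int k * pi \<and>
      \<psi> + real_of_int k * pi < (phiext Nphi phi (int q) + phiext Nphi phi (int q + 1)) / 2}"

definition conv_radon :: "nat \<Rightarrow> nat \<Rightarrow> nat \<Rightarrow> (nat \<Rightarrow> real) \<Rightarrow> (real \<Rightarrow> real \<Rightarrow> real)
    \<Rightarrow> (real \<times> real \<Rightarrow> real) \<Rightarrow> real \<Rightarrow> real \<Rightarrow> real" where
  "conv_radon Nx Ns Nphi phi \<omega> f \<phi> s =
     (\<Sum>q<Nphi. \<Sum>p<Ns. indicator (angpix Nphi phi q \<times> detpix Ns p) (\<phi>, s) *
        (\<Sum>i<Nx. \<Sum>j<Nx. \<omega> (phi q) (xc Nx i j \<bullet> theta (phi q) - sc Ns p) * integral (pix Nx i j) f))"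

definition ray_radon :: "nat \<Rightarrow> nat \<Rightarrow> nat \<Rightarrow> (nat \<Rightarrow> real)
    \<Rightarrow> (real \<times> real \<Rightarrow> real) \<Rightarrow> real \<Rightarrow> real \<Rightarrow> real" where
  "ray_radon Nx Ns Nphi phi = conv_radon Nx Ns Nphi phi (omega_rd (dx Nx))"

end

theory Submission
  imports Defs
begin

lemma mem_box_pair: "((x::real), (y::real)) \<in> box (a,c) (b,d) \<longleftrightarrow> a<x \<and> x<b \<and> c<y \<and> y<d"
  by (auto simp: mem_box Basis_prod_def)

lemma ind_int:
  fixes g :: "real \<Rightarrow> real"
  assumes "finite F" "\<And>t. t \<in> {-R..R} - F \<Longrightarrow> g t = k * indicator {a..b} t"
    "k \<noteq> 0 \<Longrightarrow> a \<le> b \<Longrightarrow> a \<in> {-R..R} \<and> b \<in> {-R..R}"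
  shows "(g has_integral k * max 0 (b - a)) {-R..R}"
proof (cases "k = 0")
  case True
  have "((\<lambda>x. 0) has_integral k * max 0 (b - a)) {-R..R}" using True by simp
  then show ?thesis
    by (rule has_integral_spike_finite[OF assms(1), rotated]) (use assms(2) True in \<open>auto simp: indicator_def\<close>)
next
  case False
  have e: "{a..b} \<inter> {-R..R} = {a..b}" using assms(3) False by auto
  have "((\<lambda>x. k) has_integral k * max 0 (b - a)) {a..b}"
    using has_integral_const_real[of k a b] by (simp add: max_def mult.commute)
  then have "((\<lambda>x. if x \<in> {a..b} then k else 0) has_integral k * max 0 (b - a)) {-R..R}"
    unfolding has_integral_restrict_Int e by assumption
  then show ?thesis
    by (rule has_integral_spike_finite[OF assms(1), rotated]) (use assms(2) in \<open>auto simp: indicator_def\<close>)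
qed

lemma gen_alg:
  fixes d c q A B tau :: real
  assumes d: "d > 0" and q: "q > 0" and c: "c \<noteq> 0" and cs: "c^2 + q^2 = 1"
    and tau: "tau = -(A*c + B*q)" and phi: "\<phi> \<noteq> 0" "\<phi> \<noteq> pi/2" and cd: "c = cos \<phi>" "q = sin \<phi>"
  shows "max 0 (min (d/(2*q) + d/(2*\<bar>c\<bar>) - \<bar>A/q + B/c\<bar>) (2 * min (d/(2*q)) (d/(2*\<bar>c\<bar>))))
     = d^2 * omega_rd d \<phi> tau"
proof -
  define p where "p = \<bar>c\<bar>"
  have p: "p > 0" using c p_def by auto
  define X where "X = (d/2*(p+q) - \<bar>tau\<bar>) / (p*q)"
  have e1: "\<bar>A/q + B/c\<bar> = \<bar>tau\<bar> / (p*q)"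
  proof -
    have "A/q + B/c = (A*c + B*q)/(c*q)" using q c by (simp add: field_simps)
    then show ?thesis using tau q p_def by (simp add: abs_mult abs_minus_commute add.commute)
  qed
  have e2: "d/(2*q) + d/(2*\<bar>c\<bar>) - \<bar>A/q + B/c\<bar> = X"
    unfolding e1 X_def using p q p_def by (simp add: field_simps)
  have kap: "kappa \<phi> = min (1/p) (1/q)" using c q cd p_def by (simp add: kappa_def)
  have e3: "2 * min (d/(2*q)) (d/(2*\<bar>c\<bar>)) = d * kappa \<phi>"
    unfolding kap p_def[symmetric] using d p q
    by (auto simp: min_def divide_simps)
  have sb: "sbar d \<phi> = d/2*(p+q)" using cd q p_def by (simp add: sbar_def)
  have su: "sunder d \<phi> = d/2*\<bar>p - q\<bar>" using cd q p_def by (simp add: sunder_def)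
  have cs': "\<bar>cos \<phi> * sin \<phi>\<bar> = p*q" using cd q p_def by (simp add: abs_mult)
  have om: "d^2 * omega_rd d \<phi> tau =
     (if sunder d \<phi> \<le> \<bar>tau\<bar> \<and> \<bar>tau\<bar> < sbar d \<phi> then X
      else if \<bar>tau\<bar> < sunder d \<phi> then d * kappa \<phi> else 0)"
    using phi d p q unfolding omega_rd_def cs' X_def sb
    by (auto simp: power2_eq_square field_simps)
  have kp: "d * kappa \<phi> * (p*q) = d * min q p" unfolding kap using p q
    by (auto simp: min_def field_simps)
  have dk: "d * kappa \<phi> > 0" unfolding kap using d p q by simp
  have Xm: "X * (p*q) = d/2*(p+q) - \<bar>tau\<bar>" unfolding X_def using p q by simp
  have mnx: "min q p = (p + q - \<bar>p - q\<bar>)/2" by (auto simp: min_def abs_if)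
  have ps: "p*q > 0" using p q by simp
  show ?thesis
  proof (cases "d/2*\<bar>p - q\<bar> \<le> \<bar>tau\<bar> \<and> \<bar>tau\<bar> < d/2*(p+q)")
    case True
    then have "X > 0" using Xm ps by (smt (verit) mult_pos_pos zero_less_mult_iff)
    moreover have "X \<le> d * kappa \<phi>"
    proof -
      have "X * (p*q) \<le> d * kappa \<phi> * (p*q)" unfolding Xm kp mnx using True d
        by (simp add: field_simps)
      then show ?thesis using ps by (meson mult_le_cancel_right_pos)
    qed
    ultimately show ?thesis unfolding e2 e3 om su sb using True by simp
  next
    case False
    show ?thesis
    proof (cases "\<bar>tau\<bar> < d/2*\<bar>p - q\<bar>")
      case True
      have "X * (p*q) > d * kappa \<phi> * (p*q)" unfolding Xm kp mnx using True d
        by (simp add: field_simps)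
      then have "X > d * kappa \<phi>" using ps by (meson mult_less_cancel_right_pos)
      then show ?thesis unfolding e2 e3 om su sb using True False dk by simp
    next
      case F2: False
      then have "\<bar>tau\<bar> \<ge> d/2*(p+q)" using False by simp
      then have "X * (p*q) \<le> 0" unfolding Xm by simp
      then have "X \<le> 0" using p q by (simp add: mult_le_0_iff)
      then show ?thesis unfolding e2 e3 om su sb using False F2 by simp
    qed
  qed
qed

lemma ival_len:
  fixes m1 m2 r1 r2 :: real
  assumes "r1 \<ge> 0" "r2 \<ge> 0"
  shows "max 0 (min (m1+r1) (m2+r2) - max (m1-r1) (m2-r2)) = max 0 (min (r1+r2-\<bar>m1-m2\<bar>) (2 * min r1 r2))"
  using assms by (auto simp: max_def min_def abs_if)

lemma hdiv:
  fixes q x d :: real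
  assumes "q > 0"
  shows "(q * x \<le> d/2) = (x \<le> d/(2*q))" "(q * x < d/2) = (x < d/(2*q))"
  using assms by (simp_all add: field_simps)

lemma core:
  fixes x0 :: "real \<times> real" and d \<phi> s R :: real
  assumes d: "d > 0" and ph: "0 \<le> \<phi>" "\<phi> < pi"
    and bnd: "\<And>t. s *\<^sub>R theta \<phi> + t *\<^sub>R thetap \<phi> \<in> cbox (x0 - (d/2, d/2)) (x0 + (d/2, d/2)) \<Longrightarrow> t \<in> {-R..R}"
  shows "((\<lambda>t. indicator (cbox (x0 - (d/2, d/2)) (x0 + (d/2, d/2))) (s *\<^sub>R theta \<phi> + t *\<^sub>R thetap \<phi>)
      - 1/2 * indicator (frontier (cbox (x0 - (d/2, d/2)) (x0 + (d/2, d/2)))) (s *\<^sub>R theta \<phi> + t *\<^sub>R thetap \<phi>))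
     has_integral d^2 * omega_rd d \<phi> (x0 \<bullet> theta \<phi> - s)) {-R..R}"
proof -
  obtain X Y where x0: "x0 = (X, Y)" by fastforce
  define c where "c = cos \<phi>"
  define q where "q = sin \<phi>"
  define A where "A = s*c - X"
  define B where "B = s*q - Y"
  define P where "P = cbox (x0 - (d/2, d/2)) (x0 + (d/2, d/2))"
  define C where "C t \<longleftrightarrow> \<bar>A - t*q\<bar> \<le> d/2 \<and> \<bar>B + t*c\<bar> \<le> d/2" for t
  define Op where "Op t \<longleftrightarrow> \<bar>A - t*q\<bar> < d/2 \<and> \<bar>B + t*c\<bar> < d/2" for t
  have Lt: "s *\<^sub>R theta \<phi> + t *\<^sub>R thetap \<phi> = (s*c - t*q, s*q + t*c)" for t
    by (simp add: theta_def thetap_def c_def q_def)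
  have P: "P = cbox (X - d/2, Y - d/2) (X + d/2, Y + d/2)" by (simp add: P_def x0)
  have inP: "s *\<^sub>R theta \<phi> + t *\<^sub>R thetap \<phi> \<in> P \<longleftrightarrow> C t" for t
    unfolding Lt P C_def A_def B_def by (auto simp: abs_if split: if_splits)
  have inO: "s *\<^sub>R theta \<phi> + t *\<^sub>R thetap \<phi> \<in> box (X - d/2, Y - d/2) (X + d/2, Y + d/2) \<longleftrightarrow> Op t" for t
    unfolding Lt Op_def A_def B_def mem_box_pair by (auto simp: abs_if split: if_splits)
  have g: "indicator P (s *\<^sub>R theta \<phi> + t *\<^sub>R thetap \<phi>)
      - 1/2 * indicator (frontier P) (s *\<^sub>R theta \<phi> + t *\<^sub>R thetap \<phi>)
      = (if C t then 1 else 0) - 1/2 * (if C t \<and> \<not> Op t then 1 else 0)" for t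
    unfolding frontier_cbox P using inP[of t] inO[of t] unfolding P by (simp add: indicator_def)
  have bC: "C t \<Longrightarrow> t \<in> {-R..R}" for t using bnd[of t] inP[of t] unfolding P_def by simp
  have cs: "c^2 + q^2 = 1" by (simp add: c_def q_def)
  have tau: "x0 \<bullet> theta \<phi> - s = -(A*c + B*q)"
  proof -
    have "x0 \<bullet> theta \<phi> - s = X*c + Y*q - s*(c^2+q^2)" using cs by (simp add: x0 theta_def c_def q_def)
    then show ?thesis by (simp add: A_def B_def power2_eq_square algebra_simps)
  qed
  have q0: "q \<ge> 0" using ph by (simp add: q_def sin_ge_zero)
  have main: "((\<lambda>t. (if C t then 1 else 0) - 1/2 * (if C t \<and> \<not> Op t then 1 else 0))
     has_integral d^2 * omega_rd d \<phi> (-(A*c + B*q))) {-R..R}"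
  proof (cases "q = 0")
    case True
    then have phi0: "\<phi> = 0" using ph sin_gt_zero[of \<phi>] by (force simp: q_def)
    then have c1: "c = 1" by (simp add: c_def)
    define k :: real where "k = (if \<bar>A\<bar> < d/2 then 1 else if \<bar>A\<bar> = d/2 then 1/2 else 0)"
    have "((\<lambda>t. (if C t then 1 else 0) - 1/2 * (if C t \<and> \<not> Op t then 1 else 0))
       has_integral k * max 0 ((-B + d/2) - (-B - d/2))) {-R..R}"
    proof (rule ind_int[of "{-B - d/2, -B + d/2}"])
      fix t assume "t \<in> {-R..R} - {-B - d/2, -B + d/2}"
      then show "(if C t then 1 else 0) - 1/2 * (if C t \<and> \<not> Op t then 1 else 0) = k * indicator {-B - d/2..-B + d/2} t"
        unfolding C_def Op_def k_def using True c1 by (auto simp: indicator_def abs_if)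
    next
      assume "k \<noteq> 0"
      then have "C (-B - d/2)" "C (-B + d/2)" unfolding C_def k_def using True c1 d by (auto split: if_splits)
      then show "-B - d/2 \<in> {-R..R} \<and> -B + d/2 \<in> {-R..R}" using bC by blast
    qed simp
    moreover have "k * max 0 ((-B + d/2) - (-B - d/2)) = d^2 * omega_rd d \<phi> (-(A*c + B*q))"
      unfolding phi0 using True c1 d
      by (simp add: k_def omega_rd_def sbar_def sunder_def kappa_def power2_eq_square)
    ultimately show ?thesis by simp
  next
    case qn0: False
    then have qp: "q > 0" using q0 by simp
    show ?thesis
    proof (cases "c = 0")
      case True
      have phi2: "\<phi> = pi/2" using cos_inj_pi[of \<phi> "pi/2"] True ph by (simp add: c_def)
      then have q1: "q = 1" unfolding q_def phi2 by simp
      define k :: real where "k = (if \<bar>B\<bar> < d/2 then 1 else if \<bar>B\<bar> = d/2 then 1/2 else 0)"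
      have "((\<lambda>t. (if C t then 1 else 0) - 1/2 * (if C t \<and> \<not> Op t then 1 else 0))
         has_integral k * max 0 ((A + d/2) - (A - d/2))) {-R..R}"
      proof (rule ind_int[of "{A - d/2, A + d/2}"])
        fix t assume "t \<in> {-R..R} - {A - d/2, A + d/2}"
        then show "(if C t then 1 else 0) - 1/2 * (if C t \<and> \<not> Op t then 1 else 0) = k * indicator {A - d/2..A + d/2} t"
          unfolding C_def Op_def k_def using True q1 by (auto simp: indicator_def abs_if)
      next
        assume "k \<noteq> 0"
        then have "C (A - d/2)" "C (A + d/2)" unfolding C_def k_def using True q1 d by (auto split: if_splits)
        then show "A - d/2 \<in> {-R..R} \<and> A + d/2 \<in> {-R..R}" using bC by blast
      qed simp
      moreover have "k * max 0 ((A + d/2) - (A - d/2)) = d^2 * omega_rd d \<phi> (-(A*c + B*q))"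
        unfolding phi2 using True q1 d
        by (simp add: k_def omega_rd_def sbar_def sunder_def kappa_def power2_eq_square)
      ultimately show ?thesis by simp
    next
      case cn0: False
      define m1 where "m1 = A/q"
      define m2 where "m2 = -B/c"
      define r1 where "r1 = d/(2*q)"
      define r2 where "r2 = d/(2*\<bar>c\<bar>)"
      have r1: "r1 \<ge> 0" "r2 \<ge> 0" using d qp by (auto simp: r1_def r2_def)
      have a1: "\<bar>A - t*q\<bar> = q * \<bar>t - m1\<bar>" for t
      proof -
        have "A - t*q = q * (m1 - t)" using qp by (simp add: m1_def field_simps)
        then show ?thesis using qp by (simp add: abs_mult abs_minus_commute)
      qed
      have a2: "\<bar>B + t*c\<bar> = \<bar>c\<bar> * \<bar>t - m2\<bar>" for t
      proof -
        have "B + t*c = c * (t - m2)" using cn0 by (simp add: m2_def field_simps)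
        then show ?thesis by (simp add: abs_mult)
      qed
      have cp: "\<bar>c\<bar> > 0" using cn0 by simp
      have C': "C t \<longleftrightarrow> \<bar>t - m1\<bar> \<le> r1 \<and> \<bar>t - m2\<bar> \<le> r2" for t
        unfolding C_def a1 a2 r1_def r2_def using hdiv[OF qp] hdiv[OF cp] by simp
      have O': "Op t \<longleftrightarrow> \<bar>t - m1\<bar> < r1 \<and> \<bar>t - m2\<bar> < r2" for t
        unfolding Op_def a1 a2 r1_def r2_def using hdiv[OF qp] hdiv[OF cp] by simp
      have Cint: "C t \<longleftrightarrow> t \<in> {max (m1-r1) (m2-r2)..min (m1+r1) (m2+r2)}" for t
        unfolding C' by (auto simp: abs_le_iff)
      have COp: "C t \<Longrightarrow> t \<notin> {m1-r1, m1+r1, m2-r2, m2+r2} \<Longrightarrow> Op t" for t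
        unfolding C' O' by (simp add: abs_le_iff abs_less_iff)
      have "((\<lambda>t. (if C t then 1 else 0) - 1/2 * (if C t \<and> \<not> Op t then 1 else 0))
         has_integral 1 * max 0 (min (m1+r1) (m2+r2) - max (m1-r1) (m2-r2))) {-R..R}"
      proof (rule ind_int[of "{m1-r1, m1+r1, m2-r2, m2+r2}"])
        fix t assume "t \<in> {-R..R} - {m1-r1, m1+r1, m2-r2, m2+r2}"
        then show "(if C t then 1 else 0) - 1/2 * (if C t \<and> \<not> Op t then 1 else 0) =
           (1::real) * indicator {max (m1-r1) (m2-r2)..min (m1+r1) (m2+r2)} t"
          using Cint[of t] COp[of t] by (auto simp: indicator_def)
      next
        assume "max (m1-r1) (m2-r2) \<le> min (m1+r1) (m2+r2)"
        then have "C (max (m1-r1) (m2-r2))" "C (min (m1+r1) (m2+r2))" unfolding Cint by auto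
        then show "max (m1-r1) (m2-r2) \<in> {-R..R} \<and> min (m1+r1) (m2+r2) \<in> {-R..R}" using bC by blast
      qed simp
      moreover have "max 0 (min (m1+r1) (m2+r2) - max (m1-r1) (m2-r2)) = d^2 * omega_rd d \<phi> (-(A*c + B*q))"
      proof -
        have "\<phi> \<noteq> 0" using qn0 by (auto simp: q_def)
        moreover have "\<phi> \<noteq> pi/2"
        proof
          assume hp: "\<phi> = pi/2"
          have "c = 0" unfolding c_def hp by simp
          with cn0 show False by simp
        qed
        ultimately have "max 0 (min (d/(2*q) + d/(2*\<bar>c\<bar>) - \<bar>A/q + B/c\<bar>) (2 * min (d/(2*q)) (d/(2*\<bar>c\<bar>))))
           = d^2 * omega_rd d \<phi> (-(A*c + B*q))"
          using gen_alg[OF d qp cn0 cs refl] by (simp add: c_def q_def)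
        moreover have "m1 - m2 = A/q + B/c" by (simp add: m1_def m2_def)
        ultimately show ?thesis unfolding ival_len[OF r1] unfolding r1_def r2_def by simp
      qed
      ultimately show ?thesis by simp
    qed
  qed
  show ?thesis
    using main unfolding tau g P_def[symmetric] .
qed



lemma pd_lemma:
  fixes Ns :: nat and x :: real
  assumes Ns: "Ns \<ge> 1" and x: "sc Ns 0 \<le> x" "x \<le> sc Ns (Ns - 1)"
  shows "(\<Sum>p<Ns. omega_pd (ds Ns) (x - sc Ns p)) = 1 / ds Ns
       \<and> (\<forall>ph<Ns. (ph + 1 < Ns \<and> sc Ns ph < x \<and> x < sc Ns (ph + 1) \<longrightarrow>
                  {p. p < Ns \<and> omega_pd (ds Ns) (x - sc Ns p) \<noteq> 0} = {ph, ph + 1})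
               \<and> (x = sc Ns ph \<longrightarrow> {p. p < Ns \<and> omega_pd (ds Ns) (x - sc Ns p) \<noteq> 0} = {ph}))"
proof -
  define \<delta> where "\<delta> = ds Ns"
  have dp: "\<delta> > 0" using Ns by (simp add: \<delta>_def ds_def)
  define y where "y = (x+1)/\<delta> - 1/2"
  have xs: "x - sc Ns p = \<delta> * (y - real p)" for p
    using dp by (simp add: y_def sc_def \<delta>_def[symmetric] field_simps)
  have w: "omega_pd \<delta> (x - sc Ns p) = max (1 - \<bar>y - real p\<bar>) 0 / \<delta>" for p
  proof -
    have a: "\<bar>\<delta> * (y - real p)\<bar> = \<delta> * \<bar>y - real p\<bar>" using dp by (simp add: abs_mult)
    have "\<delta> - \<bar>\<delta> * (y - real p)\<bar> = \<delta> * (1 - \<bar>y - real p\<bar>)" unfolding a by (simp add: right_diff_distrib)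
    then have "max (\<delta> - \<bar>\<delta> * (y - real p)\<bar>) 0 = \<delta> * max (1 - \<bar>y - real p\<bar>) 0"
      using dp by (simp add: max_def mult_le_0_iff)
    then show ?thesis unfolding omega_pd_def xs using dp by (simp add: power2_eq_square)
  qed
  have nz: "omega_pd \<delta> (x - sc Ns p) \<noteq> 0 \<longleftrightarrow> \<bar>y - real p\<bar> < 1" for p
    unfolding w using dp by (auto simp: max_def)
  have sclt: "sc Ns p < x \<longleftrightarrow> real p < y" "x < sc Ns p \<longleftrightarrow> y < real p" "x = sc Ns p \<longleftrightarrow> y = real p" for p
  proof -
    have e: "x - sc Ns p = \<delta> * (y - real p)" by (rule xs)
    have "sc Ns p < x \<longleftrightarrow> 0 < \<delta> * (y - real p)" unfolding e[symmetric] by simp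
    then show "sc Ns p < x \<longleftrightarrow> real p < y" using dp by (simp add: zero_less_mult_iff)
    have "x < sc Ns p \<longleftrightarrow> \<delta> * (y - real p) < 0" unfolding e[symmetric] by simp
    then show "x < sc Ns p \<longleftrightarrow> y < real p" using dp by (simp add: mult_less_0_iff)
    have "x = sc Ns p \<longleftrightarrow> \<delta> * (y - real p) = 0" unfolding e[symmetric] by simp
    then show "x = sc Ns p \<longleftrightarrow> y = real p" using dp by simp
  qed
  have y0: "y \<ge> 0" using x(1) sclt(2)[of 0] by (auto simp: not_less[symmetric])
  have y1: "y \<le> real Ns - 1" using x(2) sclt(1)[of "Ns - 1"] Ns by (auto simp: not_less[symmetric] of_nat_diff)
  have S1: "{p. p < Ns \<and> omega_pd \<delta> (x - sc Ns p) \<noteq> 0} = {ph, ph + 1}"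
    if "ph + 1 < Ns" "real ph < y" "y < real ph + 1" for ph
  proof -
    have "\<bar>y - real p\<bar> < 1 \<longleftrightarrow> p = ph \<or> p = ph + 1" for p
    proof
      assume "\<bar>y - real p\<bar> < 1"
      then have "real p < real ph + 2" "real ph < real p + 1" using that by auto
      then have "p < ph + 2" "ph < p + 1" by linarith+
      then show "p = ph \<or> p = ph + 1" by auto
    qed (use that in auto)
    then show ?thesis unfolding nz using that by auto
  qed
  have S2: "{p. p < Ns \<and> omega_pd \<delta> (x - sc Ns p) \<noteq> 0} = {ph}" if "ph < Ns" "y = real ph" for ph
  proof -
    have "\<bar>y - real p\<bar> < 1 \<longleftrightarrow> p = ph" for p
    proof
      assume "\<bar>y - real p\<bar> < 1"
      then have "real p < real ph + 1" "real ph < real p + 1" using that by auto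
      then have "p < ph + 1" "ph < p + 1" by linarith+
      then show "p = ph" by auto
    qed (use that in auto)
    then show ?thesis unfolding nz using that by auto
  qed
  define k where "k = nat \<lfloor>y\<rfloor>"
  have k: "real k \<le> y" "y < real k + 1" using y0 by (simp_all add: k_def)
  have kN: "k < Ns" using k y1 by linarith
  have sum: "(\<Sum>p<Ns. omega_pd \<delta> (x - sc Ns p)) = 1 / \<delta>"
  proof (cases "y = real k")
    case True
    have "(\<Sum>p<Ns. omega_pd \<delta> (x - sc Ns p)) = (\<Sum>p\<in>{k}. omega_pd \<delta> (x - sc Ns p))"
      by (rule sum.mono_neutral_right) (use S2[OF kN True] kN in auto)
    then show ?thesis using True by (simp add: w)
  next
    case False
    then have k2: "real k < y" using k by simp
    then have kN2: "k + 1 < Ns" using k y1 by linarith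
    have "(\<Sum>p<Ns. omega_pd \<delta> (x - sc Ns p)) = (\<Sum>p\<in>{k, k+1}. omega_pd \<delta> (x - sc Ns p))"
      by (rule sum.mono_neutral_right) (use S1[OF kN2 k2 k(2)] kN2 in auto)
    also have "\<dots> = (max (1 - \<bar>y - real k\<bar>) 0 + max (1 - \<bar>y - real (k+1)\<bar>) 0) / \<delta>"
      by (simp add: w add_divide_distrib)
    also have "\<dots> = 1 / \<delta>" using k2 k by (simp add: max_def abs_if)
    finally show ?thesis .
  qed
  show ?thesis unfolding \<delta>_def[symmetric]
    using sum S1 S2 sclt by auto
qed





lemma pix_eq: "pix Nx i j = cbox (real i * dx Nx - 1, real j * dx Nx - 1) ((real i + 1) * dx Nx - 1, (real j + 1) * dx Nx - 1)"
  by (simp add: pix_def xc_def algebra_simps)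

lemma nat_sep:
  fixes d :: real
  assumes d: "d > 0" and "k \<noteq> i" "real i * d - 1 < x" "x < (real i + 1) * d - 1"
  shows "\<not> (real k * d - 1 \<le> x \<and> x \<le> (real k + 1) * d - 1)"
proof
  assume h: "real k * d - 1 \<le> x \<and> x \<le> (real k + 1) * d - 1"
  show False
  proof (cases "k < i")
    case True
    then have "real k + 1 \<le> real i" by simp
    then have "(real k + 1) * d \<le> real i * d" by (rule mult_right_mono) (use d in simp)
    then show False using h assms by linarith
  next
    case False
    then have "real i + 1 \<le> real k" using assms(2) by simp
    then have "(real i + 1) * d \<le> real k * d" by (rule mult_right_mono) (use d in simp)
    then show False using h assms by linarith
  qed
qed

lemma dsum:
  fixes v :: "nat \<Rightarrow> nat \<Rightarrow> real"
  assumes "finite A" "finite B" "i \<in> A" "j \<in> B"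
  shows "(\<Sum>k\<in>A. \<Sum>l\<in>B. if k = i \<and> l = j then v k l else 0) = v i j"
proof -
  have "(\<Sum>l\<in>B. if k = i \<and> l = j then v k l else 0) = (if k = i then v i j else 0)" for k
    using assms by (cases "k = i") simp_all
  then show ?thesis using assms by simp
qed

lemma pix_int:
  fixes c :: "nat \<Rightarrow> nat \<Rightarrow> real"
  assumes Nx: "Nx \<ge> 1" and ij: "i < Nx" "j < Nx" and f: "f = (\<lambda>x. \<Sum>k<Nx. \<Sum>l<Nx. c k l * ubasis Nx k l x)"
  shows "integral (pix Nx i j) f = c i j * (dx Nx)^2"
proof -
  define d where "d = dx Nx"
  have d: "d > 0" using Nx by (simp add: d_def dx_def)
  define a where "a = (real i * d - 1, real j * d - 1)"
  define b where "b = ((real i + 1) * d - 1, (real j + 1) * d - 1)"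
  have P: "pix Nx i j = cbox a b" by (simp add: pix_eq a_def b_def d_def)
  have ub: "ubasis Nx k l x = (if k = i \<and> l = j then 1 else 0)" if x: "x \<in> box a b" for k l x
  proof -
    obtain x1 x2 where xx: "x = (x1, x2)" by fastforce
    have xb: "real i * d - 1 < x1" "x1 < (real i + 1) * d - 1" "real j * d - 1 < x2" "x2 < (real j + 1) * d - 1"
      using x unfolding xx a_def b_def mem_box_pair by auto
    show ?thesis
    proof (cases "k = i \<and> l = j")
      case True
      then have kl: "k = i" "l = j" by auto
      show ?thesis unfolding kl ubasis_def P frontier_cbox using x box_subset_cbox[of a b]
        by (auto simp: indicator_def)
    next
      case False
      have "x \<notin> pix Nx k l"
      proof
        assume "x \<in> pix Nx k l"
        then have h: "real k * d - 1 \<le> x1 \<and> x1 \<le> (real k + 1) * d - 1"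
            "real l * d - 1 \<le> x2 \<and> x2 \<le> (real l + 1) * d - 1"
          unfolding pix_eq xx d_def by auto
        show False
          using False nat_sep[OF d _ xb(1,2), of k] nat_sep[OF d _ xb(3,4), of l] h by blast
      qed
      moreover have "x \<notin> frontier (pix Nx k l)" using calculation
        by (simp add: pix_def frontier_cbox)
      ultimately show ?thesis using False by (simp add: ubasis_def indicator_def)
    qed
  qed
  have fx: "(\<Sum>k<Nx. \<Sum>l<Nx. c k l * ubasis Nx k l x) = c i j" if "x \<in> box a b" for x
    using ij by (simp add: ub[OF that] if_distrib[of "\<lambda>v. _ * v"] dsum cong: if_cong)
  have cont: "measure lborel (cbox a b) = d^2"
    using d by (simp add: a_def b_def content_Pair power2_eq_square algebra_simps)
  have "((\<lambda>x. c i j) has_integral measure lborel (cbox a b) *\<^sub>R c i j) (cbox a b)" by (rule has_integral_const)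
  then have "((\<lambda>x. c i j) has_integral c i j * d^2) (cbox a b)" unfolding cont by (simp add: mult.commute)
  then have "((\<lambda>x. \<Sum>k<Nx. \<Sum>l<Nx. c k l * ubasis Nx k l x) has_integral c i j * d^2) (cbox a b)"
    by (rule has_integral_spike[OF negligible_frontier_interval, rotated]) (use fx in \<open>auto simp: mult.commute\<close>)
  then show ?thesis unfolding P d_def f by (rule integral_unique)
qed



lemma det_lemma:
  assumes "Ns \<ge> 1"
  shows "sc Ns ph \<in> detpix Ns p \<longleftrightarrow> p = ph"
proof -
  define \<delta> where "\<delta> = ds Ns"
  have dp: "\<delta> > 0" using assms by (simp add: \<delta>_def ds_def)
  have e: "sc Ns ph - sc Ns p = (real ph - real p) * \<delta>" by (simp add: sc_def \<delta>_def algebra_simps)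
  have "sc Ns ph \<in> detpix Ns p \<longleftrightarrow> -\<delta>/2 \<le> sc Ns ph - sc Ns p \<and> sc Ns ph - sc Ns p < \<delta>/2"
    by (auto simp: detpix_def \<delta>_def)
  also have "\<dots> \<longleftrightarrow> (-1/2) * \<delta> \<le> (real ph - real p) * \<delta> \<and> (real ph - real p) * \<delta> < (1/2) * \<delta>"
    unfolding e by simp
  also have "\<dots> \<longleftrightarrow> -1/2 \<le> real ph - real p \<and> real ph - real p < 1/2"
    using dp by (simp only: mult_le_cancel_right_pos[OF dp] mult_less_cancel_right_pos[OF dp])
  also have "\<dots> \<longleftrightarrow> p = ph"
  proof
    assume h: "-1/2 \<le> real ph - real p \<and> real ph - real p < 1/2"
    then have "real p < real ph + 1" "real ph < real p + 1" by linarith+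
    then have "p < ph + 1" "ph < p + 1" by linarith+
    then show "p = ph" by simp
  qed simp
  finally show ?thesis .
qed

lemma ang_lemma:
  fixes phi :: "nat \<Rightarrow> real"
  assumes N: "Nphi \<ge> 1" and p0: "0 \<le> phi 0" and pN: "phi (Nphi - 1) < pi"
    and mono: "\<And>q1 q2. q1 < q2 \<Longrightarrow> q2 < Nphi \<Longrightarrow> phi q1 < phi q2"
    and qh: "qh < Nphi" and q: "q < Nphi"
  shows "phi qh \<in> angpix Nphi phi q \<longleftrightarrow> q = qh"
proof -
  define pe where "pe = phiext Nphi phi"
  define mm where "mm n = (pe (int n - 1) + pe (int n)) / 2" for n :: nat
  have pe_in: "pe (int n) = phi n" if "n < Nphi" for n
    using that by (simp add: pe_def phiext_def)
  have pe0: "pe 0 = phi 0" using pe_in[of 0] N by simp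
  have pe_m1: "pe (-1) = phi (Nphi - 1) - pi" by (simp add: pe_def phiext_def)
  have pe_N: "pe (int Nphi) = phi 0 + pi" by (simp add: pe_def phiext_def)
  have mmS: "mm (Suc n) = (pe (int n) + pe (int n + 1)) / 2" for n by (simp add: mm_def add.commute)
  have phmono: "phi a \<le> phi b" if "a \<le> b" "b < Nphi" for a b
    using mono[of a b] that by (cases "a = b") auto
  have lo: "mm n < phi n" if "n < Nphi" for n
  proof (cases n)
    case 0
    have "phi (Nphi - 1) - pi < phi 0" using pN p0 by linarith
    then show ?thesis using 0 N by (simp add: mm_def pe_m1 pe0)
  next
    case (Suc m)
    have "int n - 1 = int m" using Suc by simp
    then have "pe (int n - 1) = phi m" using pe_in[of m] Suc that by simp
    moreover have "phi m < phi n" using mono[of m n] Suc that by simp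
    ultimately show ?thesis using pe_in[OF that] by (simp add: mm_def)
  qed
  have hi: "phi n < mm (Suc n)" if "n < Nphi" for n
  proof (cases "Suc n = Nphi")
    case True
    then have "pe (int n + 1) = phi 0 + pi" using pe_N by (metis of_nat_Suc add.commute)
    moreover have "phi n < phi 0 + pi"
    proof -
      have "n = Nphi - 1" using True by simp
      then show ?thesis using pN p0 by simp
    qed
    ultimately show ?thesis unfolding mmS using pe_in[OF that] by simp
  next
    case False
    then have "Suc n < Nphi" using that by simp
    then have "pe (int n + 1) = phi (Suc n)" using pe_in[of "Suc n"] by (simp add: add.commute)
    moreover have "phi n < phi (Suc n)" using mono[of n "Suc n"] \<open>Suc n < Nphi\<close> by simp
    ultimately show ?thesis unfolding mmS using pe_in[OF that] by simp
  qed
  have mmmono: "mm a \<le> mm b" if "a \<le> b" "b \<le> Nphi" for a b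
    using that
  proof (induction b)
    case 0 then show ?case by simp
  next
    case (Suc b)
    show ?case
    proof (cases "a = Suc b")
      case False
      then have "mm a \<le> mm b" using Suc by simp
      also have "mm b \<le> mm (Suc b)" using lo[of b] hi[of b] Suc.prems by simp
      finally show ?thesis .
    qed simp
  qed
  have mmN: "mm Nphi = mm 0 + pi"
  proof -
    have "int Nphi - 1 = int (Nphi - 1)" using N by simp
    then have "pe (int Nphi - 1) = phi (Nphi - 1)" using pe_in[of "Nphi - 1"] N by simp
    then show ?thesis unfolding mm_def pe_N pe_m1 using pe0 pe_m1 by (simp add: field_simps)
  qed
  have ang: "angpix Nphi phi n = {\<psi> \<in> {0..<pi}. \<exists>k::int. mm n \<le> \<psi> + real_of_int k * pi \<and> \<psi> + real_of_int k * pi < mm (Suc n)}" for n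
    unfolding angpix_def mmS unfolding mm_def pe_def ..
  have range: "0 \<le> phi qh" "phi qh < pi"
  proof -
    have "qh \<le> Nphi - 1" "Nphi - 1 < Nphi" using qh by auto
    then have "phi qh \<le> phi (Nphi - 1)" by (rule phmono)
    then show "phi qh < pi" using pN by simp
    show "0 \<le> phi qh" using phmono[of 0 qh] qh p0 by simp
  qed
  show ?thesis
  proof
    assume "q = qh"
    then show "phi qh \<in> angpix Nphi phi q" unfolding ang using range lo[OF qh] hi[OF qh]
      by (auto intro!: exI[of _ 0])
  next
    assume "phi qh \<in> angpix Nphi phi q"
    then obtain k :: int where k: "mm q \<le> phi qh + real_of_int k * pi" "phi qh + real_of_int k * pi < mm (Suc q)"
      unfolding ang by auto
    have a1: "mm 0 \<le> mm q" using mmmono[of 0 q] q by simp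
    have a2: "mm (Suc q) \<le> mm 0 + pi" using mmmono[of "Suc q" Nphi] q mmN by simp
    have a3: "mm 0 < phi qh" using mmmono[of 0 qh] qh lo[OF qh] by simp
    have a4: "phi qh < mm 0 + pi" using mmmono[of "Suc qh" Nphi] qh hi[OF qh] mmN by simp
    have "real_of_int k * pi < 1 * pi" using k a2 a3 by linarith
    then have "real_of_int k < 1" using mult_less_cancel_right_pos[OF pi_gt_zero] by blast
    moreover have "(-1) * pi < real_of_int k * pi" using k a1 a4 by linarith
    then have "-1 < real_of_int k" using mult_less_cancel_right_pos[OF pi_gt_zero] by blast
    ultimately have "k = 0" by linarith
    then have k0: "mm q \<le> phi qh" "phi qh < mm (Suc q)" using k by auto
    show "q = qh"
    proof (rule ccontr)
      assume "q \<noteq> qh"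
      then consider "q < qh" | "qh < q" by linarith
      then show False
      proof cases
        case 1
        then have "mm (Suc q) \<le> mm qh" using mmmono[of "Suc q" qh] qh by simp
        then show False using k0 lo[OF qh] by simp
      next
        case 2
        then have "mm (Suc qh) \<le> mm q" using mmmono[of "Suc qh" q] q by simp
        then show False using k0 hi[OF qh] by simp
      qed
    qed
  qed
qed


theorem lemma1:
  fixes Nx Ns Nphi :: nat and phi :: "nat \<Rightarrow> real" and f :: "real \<times> real \<Rightarrow> real"
  assumes "Nx \<ge> 1" and "Ns \<ge> 1" and "Nphi \<ge> 1"
    and "0 \<le> phi 0" and "phi (Nphi - 1) < pi"
    and "\<And>q1 q2. q1 < q2 \<Longrightarrow> q2 < Nphi \<Longrightarrow> phi q1 < phi q2"
    and "in_U Nx f"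
    and "\<And>x. x \<notin> cball 0 1 \<Longrightarrow> f x = 0"
  shows "(\<forall>qh<Nphi. \<forall>ph<Ns.
            radon f (phi qh) (sc Ns ph) = ray_radon Nx Ns Nphi phi f (phi qh) (sc Ns ph))
       \<and> (\<forall>qh<Nphi. \<forall>ih<Nx. \<forall>jh<Nx.
            xc Nx ih jh \<bullet> theta (phi qh) \<in> {sc Ns 0 .. sc Ns (Ns - 1)} \<longrightarrow>
              (\<Sum>p<Ns. omega_pd (ds Ns) (xc Nx ih jh \<bullet> theta (phi qh) - sc Ns p)) = 1 / ds Ns
            \<and> (\<forall>ph<Ns.
                 (ph + 1 < Ns \<and> sc Ns ph < xc Nx ih jh \<bullet> theta (phi qh)
                    \<and> xc Nx ih jh \<bullet> theta (phi qh) < sc Ns (ph + 1) \<longrightarrow>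
                  {p. p < Ns \<and> omega_pd (ds Ns) (xc Nx ih jh \<bullet> theta (phi qh) - sc Ns p) \<noteq> 0}
                    = {ph, ph + 1})
               \<and> (xc Nx ih jh \<bullet> theta (phi qh) = sc Ns ph \<longrightarrow>
                  {p. p < Ns \<and> omega_pd (ds Ns) (xc Nx ih jh \<bullet> theta (phi qh) - sc Ns p) \<noteq> 0}
                    = {ph})))"
proof -
  obtain c :: "nat \<Rightarrow> nat \<Rightarrow> real" where f: "f = (\<lambda>x. \<Sum>i<Nx. \<Sum>j<Nx. c i j * ubasis Nx i j x)"
    using assms(7) unfolding in_U_def by blast
  have part2: "\<forall>qh<Nphi. \<forall>ih<Nx. \<forall>jh<Nx.
            xc Nx ih jh \<bullet> theta (phi qh) \<in> {sc Ns 0 .. sc Ns (Ns - 1)} \<longrightarrow>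
              (\<Sum>p<Ns. omega_pd (ds Ns) (xc Nx ih jh \<bullet> theta (phi qh) - sc Ns p)) = 1 / ds Ns
            \<and> (\<forall>ph<Ns.
                 (ph + 1 < Ns \<and> sc Ns ph < xc Nx ih jh \<bullet> theta (phi qh)
                    \<and> xc Nx ih jh \<bullet> theta (phi qh) < sc Ns (ph + 1) \<longrightarrow>
                  {p. p < Ns \<and> omega_pd (ds Ns) (xc Nx ih jh \<bullet> theta (phi qh) - sc Ns p) \<noteq> 0}
                    = {ph, ph + 1})
               \<and> (xc Nx ih jh \<bullet> theta (phi qh) = sc Ns ph \<longrightarrow>
                  {p. p < Ns \<and> omega_pd (ds Ns) (xc Nx ih jh \<bullet> theta (phi qh) - sc Ns p) \<noteq> 0}
                    = {ph}))"
    using pd_lemma[OF assms(2)] by auto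
  have part1: "radon f (phi qh) (sc Ns ph) = ray_radon Nx Ns Nphi phi f (phi qh) (sc Ns ph)"
    if qh: "qh < Nphi" and ph: "ph < Ns" for qh ph
  proof -
    define \<phi> where "\<phi> = phi qh"
    define s where "s = sc Ns ph"
    define d where "d = dx Nx"
    have d: "d > 0" using assms(1) by (simp add: d_def dx_def)
    define w where "w i j = omega_rd d \<phi> (xc Nx i j \<bullet> theta \<phi> - s)" for i j
    have range: "0 \<le> \<phi>" "\<phi> < pi"
    proof -
      have "qh \<le> Nphi - 1" "Nphi - 1 < Nphi" using qh by auto
      then have "phi qh \<le> phi (Nphi - 1)" using assms(6)[of qh "Nphi - 1"] by (cases "qh = Nphi - 1") auto
      then show "\<phi> < pi" using assms(5) by (simp add: \<phi>_def)
      show "0 \<le> \<phi>" using assms(6)[of 0 qh] qh assms(4) by (cases "qh = 0") (auto simp: \<phi>_def)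
    qed
    have Lt: "s *\<^sub>R theta \<phi> + t *\<^sub>R thetap \<phi> = (s * cos \<phi> - t * sin \<phi>, s * sin \<phi> + t * cos \<phi>)" for t
      by (simp add: theta_def thetap_def)
    have sq: "(s * cos \<phi> - t * sin \<phi>)^2 + (s * sin \<phi> + t * cos \<phi>)^2 = s^2 + t^2" for t
    proof -
      have h: "(sin \<phi>)^2 + (cos \<phi>)^2 = 1" by simp
      show ?thesis using h by algebra
    qed
    have bnd: "t \<in> {-2..2}" if "s *\<^sub>R theta \<phi> + t *\<^sub>R thetap \<phi> \<in> cbox (xc Nx i j - (d/2, d/2)) (xc Nx i j + (d/2, d/2))"
      and ij: "i < Nx" "j < Nx" for t i j
    proof -
      have i1: "real i * d - 1 \<ge> -1" "(real i + 1) * d - 1 \<le> 1" "real j * d - 1 \<ge> -1" "(real j + 1) * d - 1 \<le> 1"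
      proof -
        have "(real i + 1) * d \<le> real Nx * d" using ij d by (intro mult_right_mono) auto
        moreover have "(real j + 1) * d \<le> real Nx * d" using ij d by (intro mult_right_mono) auto
        moreover have "real Nx * d = 2" using assms(1) by (simp add: d_def dx_def)
        ultimately show "(real i + 1) * d - 1 \<le> 1" "(real j + 1) * d - 1 \<le> 1" by auto
        show "real i * d - 1 \<ge> -1" "real j * d - 1 \<ge> -1" using d by auto
      qed
      have "s *\<^sub>R theta \<phi> + t *\<^sub>R thetap \<phi> \<in> pix Nx i j" using that by (simp add: pix_def d_def)
      then have m: "\<bar>s * cos \<phi> - t * sin \<phi>\<bar> \<le> 1" "\<bar>s * sin \<phi> + t * cos \<phi>\<bar> \<le> 1"
        unfolding pix_eq Lt d_def[symmetric] using i1 by (auto simp: abs_le_iff)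
      have "(s * cos \<phi> - t * sin \<phi>)^2 \<le> 1" "(s * sin \<phi> + t * cos \<phi>)^2 \<le> 1"
        using m by (simp_all add: abs_square_le_1)
      then have "t^2 \<le> 2^2" using sq[of t] by (simp add: power2_eq_square) (smt (verit) zero_le_square)
      then have "\<bar>t\<bar> \<le> 2" using abs_le_square_iff[of t 2] by simp
      then show ?thesis by auto
    qed
    have int_ij: "((\<lambda>t. ubasis Nx i j (s *\<^sub>R theta \<phi> + t *\<^sub>R thetap \<phi>)) has_integral d^2 * w i j) {-2..2}"
      if ij: "i < Nx" "j < Nx" for i j
      unfolding ubasis_def pix_def w_def d_def[symmetric]
      by (rule core[OF d range]) (use bnd ij in auto)
    have intR: "((\<lambda>t. f (s *\<^sub>R theta \<phi> + t *\<^sub>R thetap \<phi>)) has_integral (\<Sum>i<Nx. \<Sum>j<Nx. c i j * (d^2 * w i j))) {-2..2}"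
      unfolding f
      by (intro has_integral_sum has_integral_mult_right int_ij) auto
    define r where "r = sqrt (1 - s^2)"
    have r1: "r \<le> 1" by (simp add: r_def)
    have sub: "{-r..r} \<inter> {-2..2} = {-r..r}" using r1 by auto
    have zero: "f (s *\<^sub>R theta \<phi> + t *\<^sub>R thetap \<phi>) = 0" if "t \<notin> {-r..r}" for t
    proof -
      have "s^2 + t^2 > 1"
      proof (cases "s^2 \<le> 1")
        case True
        have r0: "r \<ge> 0" using True by (simp add: r_def)
        have "r < \<bar>t\<bar>" using that by auto
        then have "r^2 < \<bar>t\<bar>^2" using power_strict_mono[of r "\<bar>t\<bar>" 2] r0 by simp
        moreover have "r^2 = 1 - s^2" using True by (simp add: r_def)
        ultimately show ?thesis by simp
      next
        case False
        then show ?thesis by (smt (verit) zero_le_power2)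
      qed
      then have "norm (s *\<^sub>R theta \<phi> + t *\<^sub>R thetap \<phi>) > 1"
        unfolding Lt norm_Pair using sq[of t] by simp
      then show ?thesis using assms(8) by (simp add: dist_norm)
    qed
    have "((\<lambda>t. if t \<in> {-r..r} then f (s *\<^sub>R theta \<phi> + t *\<^sub>R thetap \<phi>) else 0)
        has_integral (\<Sum>i<Nx. \<Sum>j<Nx. c i j * (d^2 * w i j))) {-2..2}"
      using intR zero by (smt (verit, best) has_integral_cong)
    then have "((\<lambda>t. f (s *\<^sub>R theta \<phi> + t *\<^sub>R thetap \<phi>)) has_integral (\<Sum>i<Nx. \<Sum>j<Nx. c i j * (d^2 * w i j))) {-r..r}"
      unfolding has_integral_restrict_Int sub .
    then have L: "radon f \<phi> s = (\<Sum>i<Nx. \<Sum>j<Nx. c i j * (d^2 * w i j))"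
      unfolding radon_def r_def by (rule integral_unique)
    have ind: "indicator (angpix Nphi phi q \<times> detpix Ns p) (\<phi>, s) = (if q = qh \<and> p = ph then 1 else (0::real))"
      if "q < Nphi" "p < Ns" for q p
      using ang_lemma[OF assms(3,4,5) assms(6) qh that(1)] det_lemma[OF assms(2), of ph p]
      by (simp add: indicator_def \<phi>_def s_def)
    define S where "S q p = (\<Sum>i<Nx. \<Sum>j<Nx. omega_rd (dx Nx) (phi q) (xc Nx i j \<bullet> theta (phi q) - sc Ns p) * integral (pix Nx i j) f)" for q p
    have "ray_radon Nx Ns Nphi phi f \<phi> s = (\<Sum>q<Nphi. \<Sum>p<Ns. if q = qh \<and> p = ph then S q p else 0)"
      unfolding ray_radon_def conv_radon_def S_def[symmetric]
      by (intro sum.cong refl) (simp add: ind)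
    also have "\<dots> = S qh ph" by (rule dsum) (use qh ph in auto)
    finally have R: "ray_radon Nx Ns Nphi phi f \<phi> s = (\<Sum>i<Nx. \<Sum>j<Nx. w i j * integral (pix Nx i j) f)"
      by (simp add: S_def w_def \<phi>_def s_def d_def)
    have "(\<Sum>i<Nx. \<Sum>j<Nx. w i j * integral (pix Nx i j) f) = (\<Sum>i<Nx. \<Sum>j<Nx. c i j * (d^2 * w i j))"
      by (intro sum.cong refl) (simp add: pix_int[OF assms(1) _ _ f] d_def)
    then show ?thesis using L R by (simp add: \<phi>_def s_def)
  qed
  show ?thesis using part1 part2 by blast
qed

end
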